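(* Let $\mathcal Y$ be a finite or countable label set and $\mathcal H\subseteq\mathcal Y^{\mathcal X}$ a hypothesis class, with the 0-1 loss in the realizable transductive setting. Then there exists a local unsupervised regularizer $\psi$ for $\mathcal H$ such that every learner $A$ induced by $\psi$ satisfies $\epsilon_{A,\mathcal H}(n)\le 2\,\epsilon_{\mathcal H}(n)$ for all $n\in\mathbb N$.
   Context: A local unsupervised regularizer is a function $\psi:\mathcal H\times\mathcal X^{<\omega}\times\mathcal X\to\mathbb R_{\ge0}$. For a labeled sample $S$, $S_{\mathcal X}$ is its sequence of unlabeled points and $L_S(h)$ the fraction of points of $S$ misclassified by $h$. A learner $A$ is induced by $\psi$ if for all samples $S$ and $x\in\mathcal X$, $A(S)(x)\in\{h(x):h\in\arg\min_{h\in\mathcal H}L_S(h)+\psi(h,S_{\mathcal X},x)\}$. Transductive error: for $S=(x_1,\dots,x_n)\in\mathcal X^n$, $h\in\mathcal H$, and $A(S_{-i},h)$ the output of $A$ on $(x_j,h(x_j))_{j\ne i}$, $L^{\mathrm{Trans}}_{S,h}(A)=\frac1n\sum_{i=1}^n\Pr[A(S_{-i},h)(x_i)\ne h(x_i)]$; $\epsilon_{A,\mathcal H}(n)=\sup_{S\in\mathcal X^n,h\in\mathcal H}L^{\mathrm{Trans}}_{S,h}(A)$; $\epsilon_{\mathcal H}(n)=\inf_A\epsilon_{A,\mathcal H}(n)$ over all (possibly randomized) learners. *)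

theory Defs
  imports "HOL-Probability.Probability"
begin

type_synonym ('x, 'y) learner = "('x \<times> 'y) list \<Rightarrow> 'x \<Rightarrow> 'y pmf"

definition emp_err :: "('x \<times> 'y) list \<Rightarrow> ('x \<Rightarrow> 'y) \<Rightarrow> real" where
  "emp_err S h = real (card {i. i < length S \<and> h (fst (S ! i)) \<noteq> snd (S ! i)}) / real (length S)"

definition local_regularizer ::
  "('x \<Rightarrow> 'y) set \<Rightarrow> (('x \<Rightarrow> 'y) \<Rightarrow> 'x list \<Rightarrow> 'x \<Rightarrow> real) \<Rightarrow> bool" where
  "local_regularizer H \<psi> \<longleftrightarrow> (\<forall>h\<in>H. \<forall>xs x. 0 \<le> \<psi> h xs x)"

definition reg_argmin ::
  "('x \<Rightarrow> 'y) set \<Rightarrow> (('x \<Rightarrow> 'y) \<Rightarrow> 'x list \<Rightarrow> 'x \<Rightarrow> real) \<Rightarrow> ('x \<times> 'y) list \<Rightarrow> 'x \<Rightarrow> ('x \<Rightarrow> 'y) set" where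
  "reg_argmin H \<psi> S x = {h \<in> H. \<forall>g\<in>H.
      emp_err S h + \<psi> h (map fst S) x \<le> emp_err S g + \<psi> g (map fst S) x}"

definition induced_by ::
  "('x \<Rightarrow> 'y) set \<Rightarrow> (('x \<Rightarrow> 'y) \<Rightarrow> 'x list \<Rightarrow> 'x \<Rightarrow> real) \<Rightarrow> ('x, 'y) learner \<Rightarrow> bool" where
  "induced_by H \<psi> A \<longleftrightarrow>
     (\<forall>S x. set_pmf (A S x) \<subseteq> {h x | h. h \<in> reg_argmin H \<psi> S x})"

definition loo_sample :: "'x list \<Rightarrow> ('x \<Rightarrow> 'y) \<Rightarrow> nat \<Rightarrow> ('x \<times> 'y) list" where
  "loo_sample xs h i = map (\<lambda>x. (x, h x)) (take i xs @ drop (Suc i) xs)"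

definition trans_err :: "('x, 'y) learner \<Rightarrow> 'x list \<Rightarrow> ('x \<Rightarrow> 'y) \<Rightarrow> real" where
  "trans_err A xs h = (1 / real (length xs)) *
     (\<Sum>i<length xs. measure_pmf.prob (A (loo_sample xs h i) (xs ! i)) {y. y \<noteq> h (xs ! i)})"

definition learner_eps :: "('x, 'y) learner \<Rightarrow> ('x \<Rightarrow> 'y) set \<Rightarrow> nat \<Rightarrow> ereal" where
  "learner_eps A H n = (SUP p \<in> {(xs, h). length xs = n \<and> h \<in> H}. ereal (trans_err A (fst p) (snd p)))"

definition class_eps :: "('x \<Rightarrow> 'y) set \<Rightarrow> nat \<Rightarrow> ereal" where
  "class_eps H n = (INF A. learner_eps A H n)"

end

theory Submission
  imports Defs
begin

definition ystar :: "'y pmf \<Rightarrow> 'y" where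
  "ystar p = (SOME y. pmf p y > 1/2)"

lemma prob_neq: "measure_pmf.prob p {y. y \<noteq> a} = 1 - pmf p a"
proof -
  have "{y. y \<noteq> a} = space (measure_pmf p) - {a}" by auto
  then show ?thesis
    using measure_pmf.prob_compl[of "{a}" p] by (simp add: measure_pmf_single)
qed

lemma ystar_bound:
  assumes "a \<noteq> ystar p" shows "pmf p a \<le> 1/2"
proof (cases "\<exists>y. pmf p y > 1/2")
  case True
  then have g: "pmf p (ystar p) > 1/2" unfolding ystar_def by (rule someI_ex)
  have "measure_pmf.prob p {a, ystar p} = pmf p a + pmf p (ystar p)"
    using assms by (simp add: measure_measure_pmf_finite)
  moreover have "measure_pmf.prob p {a, ystar p} \<le> 1" by simp
  ultimately show ?thesis using g by linarith
next
  case False then show ?thesis by (simp add: not_less)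
qed

lemma d_bound:
  "real (if a \<noteq> ystar p then 1 else 0) \<le> 2 * measure_pmf.prob p {y. y \<noteq> a}"
  using ystar_bound[of a p] pmf_le_1[of p a] pmf_nonneg[of p a]
  by (auto simp: prob_neq)

definition thr :: "ereal \<Rightarrow> nat \<Rightarrow> real" where
  "thr c n = (real_of_int \<lfloor>2 * real_of_ereal c * real n\<rfloor> + 1) / (2 * real n)"

definition Aopt :: "('x \<Rightarrow> 'y) set \<Rightarrow> nat \<Rightarrow> ('x, 'y) learner" where
  "Aopt H n = (SOME A. learner_eps A H n < ereal (thr (class_eps H n) n))"

definition psi :: "('x \<Rightarrow> 'y) set \<Rightarrow> ('x \<Rightarrow> 'y) \<Rightarrow> 'x list \<Rightarrow> 'x \<Rightarrow> real" where
  "psi H g xs x = (if g x = ystar (Aopt H (Suc (length xs)) (map (\<lambda>z. (z, g z)) xs) x) then 0 else 1)"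

lemma psi_nonneg: "0 \<le> psi H g xs x"
  by (simp add: psi_def)

lemma emp_err_nonneg: "0 \<le> emp_err S h"
  by (simp add: emp_err_def)

lemma emp_err_zero:
  assumes "emp_err S g = 0"
  shows "map (\<lambda>z. (z, g z)) (map fst S) = S"
proof (cases "length S = 0")
  case True then show ?thesis by simp
next
  case False
  have fin: "finite {i. i < length S \<and> g (fst (S ! i)) \<noteq> snd (S ! i)}" by simp
  from assms False have "card {i. i < length S \<and> g (fst (S ! i)) \<noteq> snd (S ! i)} = 0"
    by (simp add: emp_err_def)
  with fin have "{i. i < length S \<and> g (fst (S ! i)) \<noteq> snd (S ! i)} = {}" by simp
  then have "\<forall>i<length S. g (fst (S ! i)) = snd (S ! i)" by blast
  then show ?thesis
    by (intro nth_equalityI) (auto simp: prod_eq_iff)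
qed

lemma B_bound:
  assumes ind: "induced_by H (psi H) B" and hH: "h \<in> H" and i: "i < length xs"
  shows "measure_pmf.prob (B (loo_sample xs h i) (xs ! i)) {y. y \<noteq> h (xs ! i)}
     \<le> real (if h (xs ! i) \<noteq> ystar (Aopt H (length xs) (loo_sample xs h i) (xs ! i)) then 1 else 0)"
proof (cases "h (xs ! i) \<noteq> ystar (Aopt H (length xs) (loo_sample xs h i) (xs ! i))")
  case True then show ?thesis by simp
next
  case False
  define S where "S = loo_sample xs h i"
  define x where "x = xs ! i"
  define xs' where "xs' = take i xs @ drop (Suc i) xs"
  have S_eq: "S = map (\<lambda>z. (z, h z)) xs'" by (simp add: S_def xs'_def loo_sample_def)
  have fstS: "map fst S = xs'" by (simp add: S_eq comp_def)
  have len: "Suc (length xs') = length xs" using i by (simp add: xs'_def)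
  have hx: "h x = ystar (Aopt H (length xs) S x)" using False by (simp add: S_def x_def)
  have eh: "emp_err S h = 0"
    by (simp add: emp_err_def S_eq)
  have ph: "psi H h (map fst S) x = 0"
    using hx by (simp add: psi_def fstS len S_eq[symmetric])
  have "set_pmf (B S x) \<inter> {y. y \<noteq> h x} = {}"
  proof (rule ccontr)
    assume "set_pmf (B S x) \<inter> {y. y \<noteq> h x} \<noteq> {}"
    then obtain y where y: "y \<in> set_pmf (B S x)" "y \<noteq> h x" by blast
    from ind y(1) obtain g where gy: "y = g x" and g: "g \<in> reg_argmin H (psi H) S x"
      unfolding induced_by_def by blast
    from g hH have le: "emp_err S g + psi H g (map fst S) x \<le> emp_err S h + psi H h (map fst S) x"
      unfolding reg_argmin_def by blast
    have e0: "emp_err S g = 0" and p0: "psi H g (map fst S) x = 0"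
      using le eh ph emp_err_nonneg[of S g] psi_nonneg[of H g "map fst S" x] by linarith+
    have gS: "map (\<lambda>z. (z, g z)) xs' = S" using emp_err_zero[OF e0] fstS by simp
    from p0 have "g x = ystar (Aopt H (Suc (length xs')) (map (\<lambda>z. (z, g z)) xs') x)"
      by (simp add: psi_def fstS split: if_splits)
    then have "g x = h x" using gS len hx by simp
    with y gy show False by simp
  qed
  then have "measure_pmf.prob (B S x) {y. y \<noteq> h x} = 0"
    by (simp add: measure_pmf_zero_iff)
  then show ?thesis by (simp add: S_def x_def)
qed

lemma trans_err_nonneg: "0 \<le> trans_err A xs h"
  by (simp add: trans_err_def sum_nonneg)

theorem theorem4p1:
  fixes H :: "('x \<Rightarrow> 'y::countable) set"
  shows "\<exists>\<psi>. local_regularizer H \<psi> \<and>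
           (\<forall>A. induced_by H \<psi> A \<longrightarrow> (\<forall>n. learner_eps A H n \<le> 2 * class_eps H n))"
proof (intro exI[of _ "psi H"] conjI allI impI)
  show "local_regularizer H (psi H)" by (simp add: local_regularizer_def psi_nonneg)
next
  fix B n
  assume ind: "induced_by H (psi H) B"
  show "learner_eps B H n \<le> 2 * class_eps H n"
    unfolding learner_eps_def
  proof (rule SUP_least)
    fix p :: "'x list \<times> ('x \<Rightarrow> 'y)" assume "p \<in> {(xs, h). length xs = n \<and> h \<in> H}"
    then obtain xs h where p: "p = (xs, h)" and n: "length xs = n" and hH: "h \<in> H" by auto
    define c where "c = class_eps H n"
    have lpos: "ereal (trans_err A xs h) \<le> learner_eps A H n" for A :: "('x, 'y) learner"
      unfolding learner_eps_def using n hH SUP_upper[of "(xs, h)" "{(xs, h). length xs = n \<and> h \<in> H}" "\<lambda>p. ereal (trans_err A (fst p) (snd p))"] by auto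
    have c0: "0 \<le> c" unfolding c_def class_eps_def
    proof (intro INF_greatest)
      fix A :: "('x, 'y) learner"
      have "(0::ereal) \<le> ereal (trans_err A xs h)" using trans_err_nonneg[of A xs h] by simp
      then show "0 \<le> learner_eps A H n" using lpos[of A] by (rule order_trans)
    qed
    have "ereal (trans_err B xs h) \<le> 2 * class_eps H n"
    proof (cases "c = \<infinity>")
      case True then show ?thesis by (simp add: c_def[symmetric])
    next
      case False
      with c0 obtain r where r: "c = ereal r" "0 \<le> r"
        by (cases c) auto
      show ?thesis
      proof (cases "n = 0")
        case True
        then have "trans_err B xs h = 0" using n by (simp add: trans_err_def)
        then show ?thesis using r by (simp add: c_def[symmetric])
      next
        case False
        then have npos: "real n > 0" by simp
        define K where "K = \<lfloor>2 * r * real n\<rfloor>"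
        have tdef: "thr (class_eps H n) n = (real_of_int K + 1) / (2 * real n)"
          by (simp add: thr_def K_def c_def[symmetric] r)
        have "2 * r * real n < real_of_int K + 1" unfolding K_def by linarith
        then have "r < (real_of_int K + 1) / (2 * real n)" using npos
          by (simp add: field_simps)
        then have "class_eps H n < ereal (thr (class_eps H n) n)"
          using r tdef by (simp add: c_def[symmetric])
        then have "\<exists>A. learner_eps A H n < ereal (thr (class_eps H n) n)"
          unfolding class_eps_def by (simp add: INF_less_iff)
        then have Aok: "learner_eps (Aopt H n) H n < ereal (thr (class_eps H n) n)"
          unfolding Aopt_def by (rule someI_ex)
        define A where "A = Aopt H n"
        have tA: "trans_err A xs h < (real_of_int K + 1) / (2 * real n)"
          using lpos[of A] Aok tdef unfolding A_def by (metis ereal_less_eq(3) le_less_trans less_ereal.simps(1))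
        define d where "d = (\<lambda>i. (if h (xs ! i) \<noteq> ystar (A (loo_sample xs h i) (xs ! i)) then 1 else 0::nat))"
        have sB: "(\<Sum>i<n. measure_pmf.prob (B (loo_sample xs h i) (xs ! i)) {y. y \<noteq> h (xs ! i)})
              \<le> (\<Sum>i<n. real (d i))"
        proof (rule sum_mono)
          fix i assume "i \<in> {..<n}"
          then have "i < length xs" using n by simp
          from B_bound[OF ind hH this] show "measure_pmf.prob (B (loo_sample xs h i) (xs ! i)) {y. y \<noteq> h (xs ! i)}
              \<le> real (d i)"
            using n by (simp add: d_def A_def)
        qed
        have sA: "(\<Sum>i<n. real (d i))
              \<le> (\<Sum>i<n. 2 * measure_pmf.prob (A (loo_sample xs h i) (xs ! i)) {y. y \<noteq> h (xs ! i)})"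
          unfolding d_def by (intro sum_mono d_bound)
        have "(\<Sum>i<n. 2 * measure_pmf.prob (A (loo_sample xs h i) (xs ! i)) {y. y \<noteq> h (xs ! i)})
             = 2 * real n * trans_err A xs h"
          using npos n by (simp add: trans_err_def sum_distrib_left)
        also have "\<dots> < real_of_int K + 1" using tA npos by (simp add: field_simps)
        finally have "real (\<Sum>i<n. d i) < real_of_int K + 1" using sA by simp
        then have "int (\<Sum>i<n. d i) \<le> K" by linarith
        then have "real (\<Sum>i<n. d i) \<le> 2 * r * real n" unfolding K_def by linarith
        with sB have "(\<Sum>i<n. measure_pmf.prob (B (loo_sample xs h i) (xs ! i)) {y. y \<noteq> h (xs ! i)})
              \<le> 2 * r * real n" by simp
        then have "trans_err B xs h \<le> 2 * r"
          using npos n by (simp add: trans_err_def field_simps)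
        then show ?thesis using r by (simp add: c_def[symmetric])
      qed
    qed
    then show "ereal (trans_err B (fst p) (snd p)) \<le> 2 * class_eps H n" by (simp add: p)
  qed
qed

end
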